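(* Let $m$ and $\ell$ be positive integers, let $d=\gcd(m,\ell)$, and let $n$ be an integer with $2\le n\le m$. Then $H(n;\ell,m)=1$ if and only if $H(n;m/d)\le d$. That is: there exist pairwise distinct $x_1,\dots,x_n\in\Omega_m$ with $x_1^{\ell}+\cdots+x_n^{\ell}=0$ if and only if $n\in W(m/d)$ and there exist $y_1,\dots,y_n\in\Omega_{m/d}$ with $y_1+\cdots+y_n=0$ in which each element of $\Omega_{m/d}$ occurs at most $d$ times among $y_1,\dots,y_n$.
   Context: For a positive integer $k$, $\Omega_k$ denotes the set of complex $k$th roots of unity. For positive integers $m,\ell$, $W_\ell(m)$ is the set of positive integers $n$ for which there exist $x_1,\dots,x_n\in\Omega_m$ (repetition allowed) with $x_1^{\ell}+\cdots+x_n^{\ell}=0$; $W(m)=W_1(m)$. For $n\in W_\ell(m)$, the height $H(n;\ell,m)$ is the smallest positive integer $h$ such that there exist $x_1,\dots,x_n\in\Omega_m$ with $x_1^{\ell}+\cdots+x_n^{\ell}=0$ and every value occurs at most $h$ times in the list $x_1,\dots,x_n$ (the maximum multiplicity is $h$). For $n\in W(m)$, $H(n;m)$ denotes $H(n;1,m)$. The statement $H(n;\ell,m)=1$ is understood to include $n\in W_\ell(m)$, and $H(n;m/d)\le d$ to include $n\in W(m/d)$. *)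

theory Defs
  imports "HOL-Analysis.Analysis"
begin

definition Omega :: "nat \<Rightarrow> complex set" where
  "Omega k = {z. z ^ k = 1}"

definition Wl :: "nat \<Rightarrow> nat \<Rightarrow> nat set" where
  "Wl ell m = {n. n > 0 \<and> (\<exists>xs. length xs = n \<and> set xs \<subseteq> Omega m \<and>
                  sum_list (map (\<lambda>x. x ^ ell) xs) = 0)}"

definition W :: "nat \<Rightarrow> nat set" where
  "W m = Wl 1 m"

definition Hl :: "nat \<Rightarrow> nat \<Rightarrow> nat \<Rightarrow> nat" where
  "Hl n ell m = (LEAST h. h > 0 \<and> (\<exists>xs. length xs = n \<and> set xs \<subseteq> Omega m \<and>
                  sum_list (map (\<lambda>x. x ^ ell) xs) = 0 \<and> (\<forall>x. count_list xs x \<le> h)))"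

definition H :: "nat \<Rightarrow> nat \<Rightarrow> nat" where
  "H n m = Hl n 1 m"

end

theory Submission imports Defs begin

lemma distinct_count1: "distinct xs \<longleftrightarrow> (\<forall>x. count_list xs x \<le> 1)"
proof (induction xs)
  case Nil then show ?case by simp
next
  case (Cons a xs)
  show ?case
  proof
    assume "distinct (a#xs)" then show "\<forall>x. count_list (a#xs) x \<le> 1"
      using Cons by (simp add: count_list_0_iff)
  next
    assume h: "\<forall>x. count_list (a#xs) x \<le> 1"
    then have "\<forall>x. count_list xs x \<le> 1" by (metis count_list.simps(2) le_SucI nat_le_linear le_trans Suc_eq_plus1 order_refl not_less_eq_eq)
    moreover have "a \<notin> set xs" using h[rule_format, of a] by (simp add: count_list_0_iff[symmetric])
    ultimately show "distinct (a#xs)" using Cons by simp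
  qed
qed

lemma count_map_distinct:
  "distinct xs \<Longrightarrow> count_list (map f xs) y = card {x \<in> set xs. f x = y}"
proof (induction xs)
  case Nil then show ?case by simp
next
  case (Cons a xs)
  then show ?case
  proof (cases "f a = y")
    case True
    have "{x \<in> set (a#xs). f x = y} = insert a {x \<in> set xs. f x = y}" using True by auto
    then show ?thesis using Cons True by simp
  next
    case False
    have "{x \<in> set (a#xs). f x = y} = {x \<in> set xs. f x = y}" using False by auto
    then show ?thesis using Cons False by simp
  qed
qed

lemma least_le_iff:
  fixes Q :: "nat \<Rightarrow> bool"
  assumes mono: "\<And>a b. Q a \<Longrightarrow> a \<le> b \<Longrightarrow> Q b" and ex: "Q h0" "h0 > 0" and k: "k > 0"
  shows "(LEAST h. h > 0 \<and> Q h) \<le> k \<longleftrightarrow> Q k"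
proof
  assume "(LEAST h. h > 0 \<and> Q h) \<le> k"
  moreover have "Q (LEAST h. h > 0 \<and> Q h)" using LeastI[of "\<lambda>h. h > 0 \<and> Q h" h0] ex by blast
  ultimately show "Q k" using mono by blast
next
  assume "Q k" then show "(LEAST h. h > 0 \<and> Q h) \<le> k" using k by (intro Least_le) simp
qed

lemma least_pos:
  fixes Q :: "nat \<Rightarrow> bool"
  assumes "Q h0" "h0 > 0"
  shows "(LEAST h. h > 0 \<and> Q h) > 0"
  using LeastI[of "\<lambda>h. h > 0 \<and> Q h" h0] assms by blast

lemma Omega_ne0: "m > 0 \<Longrightarrow> x \<in> Omega m \<Longrightarrow> x \<noteq> 0"
  by (auto simp: Omega_def power_0_left)

lemma finite_Omega: "m > 0 \<Longrightarrow> finite (Omega m)"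
  unfolding Omega_def by (rule finite_roots_unity) simp

lemma card_Omega: "m > 0 \<Longrightarrow> card (Omega m) = m"
  unfolding Omega_def by (rule card_roots_unity_eq)

lemma kernel:
  fixes x :: complex
  assumes "m > 0" "x ^ m = 1" "x ^ ell = 1"
  shows "x ^ gcd m ell = 1"
proof -
  obtain a b where ab: "m * a = ell * b + gcd m ell" using bezout_nat[of m ell] assms(1) by auto
  have "1 = x ^ (m * a)" using assms by (simp add: power_mult)
  also have "\<dots> = (x ^ ell) ^ b * x ^ gcd m ell" by (simp add: ab power_add power_mult)
  finally show ?thesis using assms by simp
qed

lemma fibre_eq:
  fixes m ell :: nat and x0 :: complex
  assumes "m > 0" "ell > 0" "x0 \<in> Omega m"
  shows "{x \<in> Omega m. x ^ ell = x0 ^ ell} = (\<lambda>u. x0 * u) ` Omega (gcd m ell)"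
proof -
  let ?d = "gcd m ell"
  have x0: "x0 \<noteq> 0" "x0 ^ m = 1" using Omega_ne0[OF assms(1) assms(3)] assms(3) by (auto simp: Omega_def)
  show ?thesis
  proof (intro equalityI subsetI)
    fix x assume "x \<in> {x \<in> Omega m. x ^ ell = x0 ^ ell}"
    then have x: "x ^ m = 1" "x ^ ell = x0 ^ ell" by (auto simp: Omega_def)
    define u where "u = x / x0"
    have "u ^ m = 1" using x x0 by (simp add: u_def power_divide)
    moreover have "u ^ ell = 1" using x x0 by (simp add: u_def power_divide)
    ultimately have "u \<in> Omega ?d" using kernel[of m u ell] assms by (simp add: Omega_def)
    moreover have "x = x0 * u" using x0 by (simp add: u_def)
    ultimately show "x \<in> (\<lambda>u. x0 * u) ` Omega ?d" by blast
  next
    fix x assume "x \<in> (\<lambda>u. x0 * u) ` Omega ?d"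
    then obtain u where u: "u ^ ?d = 1" "x = x0 * u" by (auto simp: Omega_def)
    obtain a where a: "m = ?d * a" by (metis gcd_dvd1 dvdE)
    obtain b where b: "ell = ?d * b" by (metis gcd_dvd2 dvdE)
    have "u ^ m = (u ^ ?d) ^ a" by (subst a) (simp add: power_mult)
    then have "u ^ m = 1" using u by simp
    moreover have "u ^ ell = (u ^ ?d) ^ b" by (subst b) (simp add: power_mult)
    then have "u ^ ell = 1" using u by simp
    ultimately show "x \<in> {x \<in> Omega m. x ^ ell = x0 ^ ell}"
      using u x0 by (simp add: Omega_def power_mult_distrib)
  qed
qed

lemma fibre_card:
  fixes m ell :: nat and x0 :: complex
  assumes "m > 0" "ell > 0" "x0 \<in> Omega m"
  shows "card {x \<in> Omega m. x ^ ell = x0 ^ ell} = gcd m ell"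
proof -
  have "x0 \<noteq> 0" using Omega_ne0[OF assms(1) assms(3)] .
  then have "inj_on (\<lambda>u. x0 * u) (Omega (gcd m ell))" by (auto simp: inj_on_def)
  then have "card ((\<lambda>u. x0 * u) ` Omega (gcd m ell)) = card (Omega (gcd m ell))" by (rule card_image)
  also have "\<dots> = gcd m ell" using assms by (intro card_Omega) simp
  finally show ?thesis using fibre_eq[OF assms] by simp
qed

lemma fibre_card_le:
  fixes m ell :: nat and y :: complex
  assumes "m > 0" "ell > 0"
  shows "card {x \<in> Omega m. x ^ ell = y} \<le> gcd m ell"
proof (cases "\<exists>x0 \<in> Omega m. x0 ^ ell = y")
  case True
  then obtain x0 where "x0 \<in> Omega m" "y = x0 ^ ell" by auto
  then show ?thesis using fibre_card[OF assms] by simp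
next
  case False
  then have e: "{x \<in> Omega m. x ^ ell = y} = {}" by blast
  show ?thesis unfolding e by simp
qed

lemma image_pow:
  fixes m ell :: nat
  assumes "m > 0" "ell > 0"
  shows "(\<lambda>x. x ^ ell) ` Omega m = Omega (m div gcd m ell)"
proof -
  let ?d = "gcd m ell" and ?f = "\<lambda>x::complex. x ^ ell"
  obtain a where a: "m = ?d * a" by (metis gcd_dvd1 dvdE)
  obtain b where b: "ell = ?d * b" by (metis gcd_dvd2 dvdE)
  have dpos: "?d > 0" using assms by simp
  have "?d * a div ?d = a" using dpos by (rule nonzero_mult_div_cancel_left[OF gr_implies_not0])
  then have ma: "m div ?d = a" using a by metis
  have apos: "a > 0" using a assms by (cases a) auto
  have sub: "?f ` Omega m \<subseteq> Omega a"
  proof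
    fix y assume "y \<in> ?f ` Omega m"
    then obtain x where x: "x ^ m = 1" "y = x ^ ell" by (auto simp: Omega_def)
    have "y ^ a = x ^ (ell * a)" by (simp add: x power_mult)
    also have "ell * a = m * b" using a b by (metis mult.commute mult.left_commute)
    also have "x ^ (m * b) = (x ^ m) ^ b" by (simp add: power_mult)
    finally have "y ^ a = (x ^ m) ^ b" .
    then show "y \<in> Omega a" using x by (simp add: Omega_def)
  qed
  have "card (Omega m) = (\<Sum>y\<in>?f ` Omega m. card {x \<in> Omega m. ?f x = y})"
    unfolding card_eq_sum by (rule sum.image_gen[OF finite_Omega[OF assms(1)]])
  also have "\<dots> = (\<Sum>y\<in>?f ` Omega m. ?d)"
  proof (rule sum.cong)
    fix y assume "y \<in> ?f ` Omega m"
    then obtain x0 where "x0 \<in> Omega m" "y = x0 ^ ell" by blast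
    then show "card {x \<in> Omega m. ?f x = y} = ?d" using fibre_card[OF assms] by simp
  qed simp
  also have "\<dots> = ?d * card (?f ` Omega m)" by simp
  finally have "?d * card (?f ` Omega m) = m" using card_Omega assms by simp
  then have "?d * card (?f ` Omega m) = ?d * a" using a by (rule trans)
  then have "card (?f ` Omega m) = card (Omega a)" using dpos card_Omega[OF apos] assms by simp
  then have "?f ` Omega m = Omega a"
    using sub finite_Omega[OF apos] by (intro card_subset_eq) auto
  then show ?thesis using ma by simp
qed

lemma lift:
  fixes m ell :: nat and ys :: "complex list"
  assumes "m > 0" "ell > 0" "set ys \<subseteq> Omega (m div gcd m ell)"
    "\<forall>y. count_list ys y \<le> gcd m ell"
  shows "\<exists>xs. distinct xs \<and> set xs \<subseteq> Omega m \<and> map (\<lambda>x. x ^ ell) xs = ys"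
  using assms(3,4)
proof (induction ys)
  case Nil then show ?case by simp
next
  case (Cons y ys)
  have "\<forall>z. count_list ys z \<le> gcd m ell"
  proof
    fix z show "count_list ys z \<le> gcd m ell" using Cons.prems(2)[rule_format, of z]
      by (simp split: if_splits)
  qed
  then obtain xs where xs: "distinct xs" "set xs \<subseteq> Omega m" "map (\<lambda>x. x ^ ell) xs = ys"
    using Cons by auto
  have cy: "count_list ys y < gcd m ell" using Cons.prems(2)[rule_format, of y] by simp
  have "y \<in> (\<lambda>x. x ^ ell) ` Omega m" using Cons.prems(1) image_pow[OF assms(1,2)] by simp
  then obtain x0 where x0: "x0 \<in> Omega m" "y = x0 ^ ell" by blast
  let ?F = "{x \<in> Omega m. x ^ ell = y}"
  have cF: "card ?F = gcd m ell" using fibre_card[OF assms(1,2) x0(1)] x0(2) by simp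
  have "card {x \<in> set xs. x ^ ell = y} = count_list ys y"
    using count_map_distinct[OF xs(1), of "\<lambda>x. x ^ ell" y] xs(3) by simp
  then have "card {x \<in> set xs. x ^ ell = y} < card ?F" using cy cF by simp
  moreover have "finite {x \<in> set xs. x ^ ell = y}" by simp
  ultimately have "\<not> ?F \<subseteq> {x \<in> set xs. x ^ ell = y}"
    using card_mono leD by blast
  then obtain x where x: "x \<in> Omega m" "x ^ ell = y" "x \<notin> set xs" by blast
  have "distinct (x # xs)" using xs(1) x(3) by simp
  moreover have "set (x # xs) \<subseteq> Omega m" using xs(2) x(1) by simp
  moreover have "map (\<lambda>x. x ^ ell) (x # xs) = y # ys" using xs(3) x(2) by simp
  ultimately show ?case by (intro exI[of _ "x # xs"]) simp
qed

theorem theorem3: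
  fixes m ell n d :: nat
  assumes "m > 0" and "ell > 0" and "d = gcd m ell" and "2 \<le> n" and "n \<le> m"
  shows "(n \<in> Wl ell m \<and> Hl n ell m = 1) \<longleftrightarrow> (n \<in> W (m div d) \<and> H n (m div d) \<le> d)"
proof -
  define QL where "QL h = (\<exists>xs. length xs = n \<and> set xs \<subseteq> Omega m \<and>
                  sum_list (map (\<lambda>x. x ^ ell) xs) = 0 \<and> (\<forall>x. count_list xs x \<le> h))" for h
  define QR where "QR h = (\<exists>xs. length xs = n \<and> set xs \<subseteq> Omega (m div d) \<and>
                  sum_list (map (\<lambda>x. x ^ 1) xs) = 0 \<and> (\<forall>x. count_list xs x \<le> h))" for h
  have npos: "n > 0" using assms by simp
  have dpos: "d > 0" using assms by simp
  have monoL: "QL b" if qa: "QL a" "a \<le> b" for a b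
  proof -
    obtain xs where "length xs = n \<and> set xs \<subseteq> Omega m \<and>
                  sum_list (map (\<lambda>x. x ^ ell) xs) = 0 \<and> (\<forall>x. count_list xs x \<le> a)"
      using qa(1) unfolding QL_def by blast
    then show ?thesis unfolding QL_def using qa(2) by (blast intro: le_trans)
  qed
  have monoR: "QR b" if qa: "QR a" "a \<le> b" for a b
  proof -
    obtain xs where "length xs = n \<and> set xs \<subseteq> Omega (m div d) \<and>
                  sum_list (map (\<lambda>x. x ^ 1) xs) = 0 \<and> (\<forall>x. count_list xs x \<le> a)"
      using qa(1) unfolding QR_def by blast
    then show ?thesis unfolding QR_def using qa(2) by (blast intro: le_trans)
  qed
  have QRn: "QR n" if qa: "QR a" for a
  proof -
    obtain xs where xs: "length xs = n \<and> set xs \<subseteq> Omega (m div d) \<and>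
                  sum_list (map (\<lambda>x. x ^ 1) xs) = 0 \<and> (\<forall>x. count_list xs x \<le> a)"
      using qa(1) unfolding QR_def by blast
    have "\<forall>x. count_list xs x \<le> n" using xs count_le_length by metis
    then show ?thesis unfolding QR_def using xs by blast
  qed
  have QLn: "QL n" if qa: "QL a" for a
  proof -
    obtain xs where xs: "length xs = n \<and> set xs \<subseteq> Omega m \<and>
                  sum_list (map (\<lambda>x. x ^ ell) xs) = 0 \<and> (\<forall>x. count_list xs x \<le> a)"
      using qa(1) unfolding QL_def by blast
    have "\<forall>x. count_list xs x \<le> n" using xs count_le_length by metis
    then show ?thesis unfolding QL_def using xs by blast
  qed
  have HlE: "Hl n ell m = (LEAST h. h > 0 \<and> QL h)" unfolding Hl_def QL_def by simp
  have HE: "H n (m div d) = (LEAST h. h > 0 \<and> QR h)" unfolding H_def Hl_def QR_def by simp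
  have WlE: "n \<in> Wl ell m \<longleftrightarrow> QL n"
  proof
    assume "n \<in> Wl ell m"
    then obtain xs where "length xs = n" "set xs \<subseteq> Omega m" "sum_list (map (\<lambda>x. x ^ ell) xs) = 0"
      unfolding Wl_def by blast
    then have "QL n" unfolding QL_def using count_le_length by metis
    then show "QL n" .
  next
    assume "QL n" then show "n \<in> Wl ell m" unfolding QL_def Wl_def using npos by blast
  qed
  have WE: "n \<in> W (m div d) \<longleftrightarrow> QR n"
  proof
    assume "n \<in> W (m div d)"
    then obtain xs where "length xs = n" "set xs \<subseteq> Omega (m div d)" "sum_list (map (\<lambda>x. x ^ 1) xs) = 0"
      unfolding W_def Wl_def by blast
    then have "QR n" unfolding QR_def using count_le_length by metis
    then show "QR n" .
  next
    assume "QR n" then show "n \<in> W (m div d)" unfolding QR_def W_def Wl_def using npos by blast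
  qed
  have L: "(n \<in> Wl ell m \<and> Hl n ell m = 1) \<longleftrightarrow> QL 1"
  proof
    assume h: "n \<in> Wl ell m \<and> Hl n ell m = 1"
    then have "QL n" using WlE by simp
    then show "QL 1" using least_le_iff[of QL n 1, OF monoL] h npos HlE by simp
  next
    assume h: "QL 1"
    then have "QL n" using QLn by blast
    then have "n \<in> Wl ell m" using WlE by simp
    moreover have "Hl n ell m \<le> 1" using least_le_iff[of QL 1 1, OF monoL] h HlE by simp
    moreover have "Hl n ell m > 0" using least_pos[of QL 1] h HlE by simp
    ultimately show "n \<in> Wl ell m \<and> Hl n ell m = 1" by simp
  qed
  have R: "(n \<in> W (m div d) \<and> H n (m div d) \<le> d) \<longleftrightarrow> QR d"
  proof
    assume h: "n \<in> W (m div d) \<and> H n (m div d) \<le> d"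
    then have "QR n" using WE by simp
    then show "QR d" using least_le_iff[of QR n d, OF monoR] h npos dpos HE by simp
  next
    assume h: "QR d"
    then have "QR n" using QRn by blast
    then have "n \<in> W (m div d)" using WE by simp
    moreover have "H n (m div d) \<le> d" using least_le_iff[of QR d d, OF monoR] h dpos HE by simp
    ultimately show "n \<in> W (m div d) \<and> H n (m div d) \<le> d" by simp
  qed
  have core: "QL 1 \<longleftrightarrow> QR d"
  proof
    assume "QL 1"
    then obtain xs where xs: "length xs = n" "set xs \<subseteq> Omega m"
      "sum_list (map (\<lambda>x. x ^ ell) xs) = 0" "\<forall>x. count_list xs x \<le> 1"
      unfolding QL_def by blast
    have dxs: "distinct xs" using xs(4) distinct_count1 by blast
    let ?ys = "map (\<lambda>x. x ^ ell) xs"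
    have "set ?ys = (\<lambda>x. x ^ ell) ` set xs" by simp
    also have "\<dots> \<subseteq> (\<lambda>x. x ^ ell) ` Omega m" using xs(2) by (rule image_mono)
    also have "\<dots> = Omega (m div d)" using image_pow[OF assms(1,2)] assms(3) by simp
    finally have "set ?ys \<subseteq> Omega (m div d)" .
    moreover have "\<forall>y. count_list ?ys y \<le> d"
    proof
      fix y
      have "count_list ?ys y = card {x \<in> set xs. x ^ ell = y}"
        by (rule count_map_distinct[OF dxs])
      also have "\<dots> \<le> card {x \<in> Omega m. x ^ ell = y}"
        using xs(2) finite_Omega[OF assms(1)] by (intro card_mono) (simp, blast)
      also have "\<dots> \<le> d" using fibre_card_le[OF assms(1,2)] assms(3) by simp
      finally show "count_list ?ys y \<le> d" .
    qed
    moreover have "length ?ys = n" using xs(1) by simp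
    moreover have "sum_list (map (\<lambda>x. x ^ 1) ?ys) = 0" using xs(3) by simp
    ultimately show "QR d" unfolding QR_def by blast
  next
    assume "QR d"
    then obtain ys where ys: "length ys = n" "set ys \<subseteq> Omega (m div d)"
      "sum_list (map (\<lambda>x. x ^ 1) ys) = 0" "\<forall>x. count_list ys x \<le> d"
      unfolding QR_def by blast
    have ys3: "sum_list ys = 0" using ys(3) by simp
    have y2: "set ys \<subseteq> Omega (m div gcd m ell)" using ys(2) unfolding assms(3) .
    have y4: "\<forall>x. count_list ys x \<le> gcd m ell" using ys(4) unfolding assms(3) .
    obtain xs where xs: "distinct xs" "set xs \<subseteq> Omega m" "map (\<lambda>x. x ^ ell) xs = ys"
      using lift[OF assms(1,2) y2 y4] by blast
    have "\<forall>x. count_list xs x \<le> 1" using distinct_count1[THEN iffD1, OF xs(1)] .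
    moreover have "length xs = n" using ys(1) unfolding xs(3)[symmetric] by simp
    moreover have "sum_list (map (\<lambda>x. x ^ ell) xs) = 0" using xs(3) ys3 by simp
    ultimately show "QL 1" unfolding QL_def using xs(2) by (intro exI[of _ xs]) simp
  qed
  show ?thesis using L R core by simp
qed

end
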